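(* For every fixed integer $\Delta\ge 2$ there is a constant $\kappa=\kappa(\Delta)>0$ such that for arbitrarily large values of $|V|$ there exists a partition exchange economy with cycle bound $\Delta$ and only $n=3$ organizations whose $\lfloor\kappa|V|\rfloor$-supplemented core is empty. (That is, $\Omega(|V|)$ additional altruistic donors may be necessary.)
   Context: A partition exchange economy consists of organizations $N=\{1,\dots,n\}$; pairwise disjoint finite sets $V^1,\dots,V^n$, $V=\bigcup_iV^i$; patient sets $U^i\subseteq V^i$; a directed compatibility graph $\mathcal G=(V,E)$; and a cycle bound $\Delta$. An exchange among $W\subseteq V$ is a set of vertex-disjoint directed cycles of length at most $\Delta$ in $\mathcal G[W]$; $u_i(\mathcal E)$ is the number of vertices of $U^i$ lying on cycles of $\mathcal E$. Given a finite set $V^0$ of new vertices (additional altruistic donors, in no organization), $\mathcal G^{+V^0}$ adds these vertices, an arc from every other vertex into each $a\in V^0$, and for each $a\in V^0$ arcs from $a$ to an arbitrarily chosen set of vertices; exchanges in $\mathcal G^{+V^0}$ are sets of vertex-disjoint cycles of length $\le\Delta$ in it. A nonempty coalition $P\subseteq N$ blocks an exchange $\mathcal E$ if some exchange $\mathcal E'$ among $\bigcup_{i\in P}V^i$ (in $\mathcal G$) has $u_i(\mathcal E')>u_i(\mathcal E)$ for all $i\in P$. An exchange of $\mathcal G^{+V^0}$ blocked by no coalition is in the $V^0$-supplemented core. The $d$-supplemented core is nonempty if for some $V^0$ with $|V^0|\le d$ and some choice of its out-arcs the $V^0$-supplemented core is nonempty; otherwise it is empty. *)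

theory Defs
  imports Complex_Main
begin

text \<open>Organizations are 1..n; vertices are natural
numbers (so that fresh altruistic-donor vertices can always be added).
Vo i = V^i, Uo i = U^i (patients), E = arcs of the compatibility graph.\<close>

definition econ_V :: "nat \<Rightarrow> (nat \<Rightarrow> nat set) \<Rightarrow> nat set" where
  "econ_V n Vo = (\<Union>i\<in>{1..n}. Vo i)"

definition valid_economy ::
  "nat \<Rightarrow> (nat \<Rightarrow> nat set) \<Rightarrow> (nat \<Rightarrow> nat set) \<Rightarrow> (nat \<times> nat) set \<Rightarrow> bool" where
  "valid_economy n Vo Uo E \<longleftrightarrow>
     (\<forall>i\<in>{1..n}. finite (Vo i) \<and> Uo i \<subseteq> Vo i) \<and>
     (\<forall>i\<in>{1..n}. \<forall>j\<in>{1..n}. i \<noteq> j \<longrightarrow> Vo i \<inter> Vo j = {}) \<and>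
     E \<subseteq> econ_V n Vo \<times> econ_V n Vo \<and> (\<forall>v. (v, v) \<notin> E)"

definition is_cycle :: "('v \<times> 'v) set \<Rightarrow> nat \<Rightarrow> 'v set \<Rightarrow> 'v list \<Rightarrow> bool" where
  "is_cycle E \<Delta> W c \<longleftrightarrow> c \<noteq> [] \<and> distinct c \<and> length c \<le> \<Delta> \<and> set c \<subseteq> W \<and>
     (\<forall>i<length c. (c ! i, c ! ((i + 1) mod length c)) \<in> E)"

definition exchange :: "('v \<times> 'v) set \<Rightarrow> nat \<Rightarrow> 'v set \<Rightarrow> 'v list set \<Rightarrow> bool" where
  "exchange E \<Delta> W X \<longleftrightarrow> (\<forall>c\<in>X. is_cycle E \<Delta> W c) \<and>
     (\<forall>c\<in>X. \<forall>c'\<in>X. c \<noteq> c' \<longrightarrow> set c \<inter> set c' = {})"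

definition utility :: "'v set \<Rightarrow> 'v list set \<Rightarrow> nat" where
  "utility U X = card (U \<inter> (\<Union>c\<in>X. set c))"

definition supp_graph :: "nat set \<Rightarrow> (nat \<times> nat) set \<Rightarrow> nat set \<Rightarrow> (nat \<Rightarrow> nat set) \<Rightarrow> (nat \<times> nat) set" where
  "supp_graph V E V0 Out = E \<union> {(x, a). a \<in> V0 \<and> x \<in> V \<union> V0 \<and> x \<noteq> a}
      \<union> {(a, y). a \<in> V0 \<and> y \<in> Out a}"

definition blocks ::
  "nat \<Rightarrow> (nat \<Rightarrow> nat set) \<Rightarrow> (nat \<Rightarrow> nat set) \<Rightarrow> (nat \<times> nat) set \<Rightarrow> nat \<Rightarrow> nat set \<Rightarrow> nat list set \<Rightarrow> bool" where
  "blocks n Vo Uo E \<Delta> P X \<longleftrightarrow> P \<noteq> {} \<and> P \<subseteq> {1..n} \<and>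
     (\<exists>X'. exchange E \<Delta> (\<Union>i\<in>P. Vo i) X' \<and> (\<forall>i\<in>P. utility (Uo i) X' > utility (Uo i) X))"

definition in_supp_core ::
  "nat \<Rightarrow> (nat \<Rightarrow> nat set) \<Rightarrow> (nat \<Rightarrow> nat set) \<Rightarrow> (nat \<times> nat) set \<Rightarrow> nat \<Rightarrow> nat set \<Rightarrow> (nat \<Rightarrow> nat set)
    \<Rightarrow> nat list set \<Rightarrow> bool" where
  "in_supp_core n Vo Uo E \<Delta> V0 Out X \<longleftrightarrow>
     exchange (supp_graph (econ_V n Vo) E V0 Out) \<Delta> (econ_V n Vo \<union> V0) X \<and>
     (\<forall>P. \<not> blocks n Vo Uo E \<Delta> P X)"

definition supp_core_empty ::
  "nat \<Rightarrow> (nat \<Rightarrow> nat set) \<Rightarrow> (nat \<Rightarrow> nat set) \<Rightarrow> (nat \<times> nat) set \<Rightarrow> nat \<Rightarrow> nat \<Rightarrow> bool" where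
  "supp_core_empty n Vo Uo E \<Delta> d \<longleftrightarrow>
     \<not> (\<exists>V0 Out X. finite V0 \<and> card V0 \<le> d \<and> V0 \<inter> econ_V n Vo = {} \<and>
          (\<forall>a\<in>V0. Out a \<subseteq> (econ_V n Vo \<union> V0) - {a}) \<and>
          in_supp_core n Vo Uo E \<Delta> V0 Out X)"

end

theory Submission
  imports Defs "HOL-Library.Countable"
begin


datatype vtx = Hv nat nat nat | Dn nat nat | Pa nat nat | Qa nat nat

instance vtx :: countable by countable_datatype

lemma cyc_arc:
  assumes "is_cycle E d W c" "i < length c"
  shows "(c ! i, c ! (Suc i mod length c)) \<in> E"
  using assms unfolding is_cycle_def by auto

lemma telescope:
  fixes f :: "nat \<Rightarrow> 'a::comm_monoid_add"
  assumes "0 < n"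
  shows "(\<Sum>i<n. f (Suc i mod n)) = (\<Sum>i<n. f i)"
proof -
  obtain n' where n: "n = Suc n'" using assms by (cases n) auto
  have "(\<Sum>i<Suc n'. f (Suc i mod Suc n')) = (\<Sum>i<n'. f (Suc i mod Suc n')) + f (Suc n' mod Suc n')"
    by simp
  also have "(\<Sum>i<n'. f (Suc i mod Suc n')) = (\<Sum>i<n'. f (Suc i))"
    by (rule sum.cong) auto
  also have "f (Suc n' mod Suc n') = f 0" by simp
  also have "(\<Sum>i<n'. f (Suc i)) + f 0 = (\<Sum>i<Suc n'. f i)"
    by (subst sum.lessThan_Suc_shift) (simp add: add.commute)
  finally show ?thesis using n by simp
qed

lemma suc_mod_inj:
  assumes "a < n" "b < n" "Suc a mod n = Suc b mod n"
  shows "a = b"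
proof -
  have "Suc a mod n = (if Suc a = n then 0 else Suc a)" using assms(1) by auto
  moreover have "Suc b mod n = (if Suc b = n then 0 else Suc b)" using assms(2) by auto
  ultimately show ?thesis using assms by (auto split: if_splits)
qed

lemma cyc_closure:
  assumes cyc: "is_cycle E d W c"
    and cl: "\<And>x y. (x, y) \<in> E \<Longrightarrow> x \<in> S \<Longrightarrow> y \<in> S"
    and p: "p < length c" "c ! p \<in> S"
  shows "set c \<subseteq> S"
proof -
  let ?n = "length c"
  have npos: "0 < ?n" using p by auto
  have step: "c ! ((p + k) mod ?n) \<in> S" for k
  proof (induction k)
    case 0 then show ?case using p by simp
  next
    case (Suc k)
    have lt: "(p + k) mod ?n < ?n" using npos by simp
    have "(c ! ((p + k) mod ?n), c ! (Suc ((p + k) mod ?n) mod ?n)) \<in> E"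
      using cyc_arc[OF cyc lt] .
    moreover have "Suc ((p + k) mod ?n) mod ?n = (p + Suc k) mod ?n"
      by (simp add: mod_Suc_eq)
    ultimately show ?case using cl Suc by metis
  qed
  show ?thesis
  proof
    fix x assume "x \<in> set c"
    then obtain q where q: "q < ?n" "c ! q = x" by (auto simp: in_set_conv_nth)
    have "(p + (q + ?n - p)) mod ?n = q" using q p by simp
    then show "x \<in> S" using step[of "q + ?n - p"] q by simp
  qed
qed

lemma sum_nth_set:
  assumes "distinct c"
  shows "(\<Sum>i<length c. f (c ! i)) = sum f (set c)"
proof -
  have "sum f (set c) = sum_list (map f c)" using assms by (simp add: sum_list_distinct_conv_sum_set)
  also have "\<dots> = (\<Sum>i<length c. f (c ! i))" by (simp add: sum_list_sum_nth atLeast0LessThan)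
  finally show ?thesis by simp
qed



definition Lf :: "nat \<Rightarrow> nat \<Rightarrow> nat" where
  "Lf dl i = (if i = 1 then dl - dl div 2 else dl div 2)"

definition nxt :: "nat \<Rightarrow> nat" where
  "nxt a = (if a = 3 then 1 else Suc a)"

definition hubV :: "nat \<Rightarrow> nat \<Rightarrow> vtx set" where
  "hubV dl m = {Hv h i k | h i k. h < 2*m \<and> i \<in> {1,2,3} \<and> k < Lf dl i}"

definition starV :: "nat \<Rightarrow> vtx set" where
  "starV m = {v. \<exists>j a. j < m \<and> a \<in> {1,2,3} \<and> (v = Dn j a \<or> v = Pa j a \<or> v = Qa j a)}"

definition Vall :: "nat \<Rightarrow> nat \<Rightarrow> vtx set" where
  "Vall dl m = hubV dl m \<union> starV m"

fun orgv :: "vtx \<Rightarrow> nat" where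
  "orgv (Hv h i k) = i"
| "orgv (Dn j a) = a"
| "orgv (Pa j a) = a"
| "orgv (Qa j a) = nxt a"

fun patv :: "vtx \<Rightarrow> bool" where
  "patv (Hv h i k) = (k = 0)"
| "patv (Dn j a) = False"
| "patv (Pa j a) = True"
| "patv (Qa j a) = True"

definition arcv :: "nat \<Rightarrow> nat \<Rightarrow> vtx \<Rightarrow> vtx \<Rightarrow> bool" where
  "arcv dl m v w \<longleftrightarrow>
    (\<exists>h i k. h < 2*m \<and> i \<in> {1,2,3} \<and> Suc k < Lf dl i \<and> v = Hv h i k \<and> w = Hv h i (Suc k)) \<or>
    (\<exists>h i j. h < 2*m \<and> i \<in> {1,2,3} \<and> j \<in> {1,2,3} \<and> i \<noteq> j \<and> v = Hv h i (Lf dl i - 1) \<and> w = Hv h j 0) \<or>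
    (\<exists>j a. j < m \<and> a \<in> {1,2,3} \<and>
       ((v = Dn j a \<and> (w = Pa j a \<or> w = Qa j a)) \<or> ((v = Pa j a \<or> v = Qa j a) \<and> w = Dn j a)))"

definition Ev :: "nat \<Rightarrow> nat \<Rightarrow> (nat \<times> nat) set" where
  "Ev dl m = {(to_nat v, to_nat w) | v w. arcv dl m v w}"

definition VoF :: "nat \<Rightarrow> nat \<Rightarrow> nat \<Rightarrow> nat set" where
  "VoF dl m i = to_nat ` {v \<in> Vall dl m. orgv v = i}"

definition UoF :: "nat \<Rightarrow> nat \<Rightarrow> nat \<Rightarrow> nat set" where
  "UoF dl m i = to_nat ` {v \<in> Vall dl m. orgv v = i \<and> patv v}"

lemma Lf_facts:
  assumes "2 \<le> dl"
  shows "Lf dl 1 \<ge> 1" "Lf dl 2 \<ge> 1" "Lf dl 3 \<ge> 1"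
    "Lf dl 1 + Lf dl 2 = dl" "Lf dl 2 + Lf dl 3 \<le> dl" "Lf dl 3 + Lf dl 1 = dl"
    "Lf dl 1 + Lf dl 2 + Lf dl 3 > dl"
  using assms by (auto simp: Lf_def)

lemma Lf_pos: "2 \<le> dl \<Longrightarrow> i \<in> {1,2,3} \<Longrightarrow> 1 \<le> Lf dl i"
  using Lf_facts by auto

lemma Ev_iff: "(x, y) \<in> Ev dl m \<longleftrightarrow> (\<exists>v w. x = to_nat v \<and> y = to_nat w \<and> arcv dl m v w)"
  unfolding Ev_def by auto

lemma hub_closed:
  assumes dl: "2 \<le> dl" and "(x, y) \<in> Ev dl m"
    and "x \<in> to_nat ` {Hv h i k | i k. i \<in> {1,2,3} \<and> k < Lf dl i}"
  shows "y \<in> to_nat ` {Hv h i k | i k. i \<in> {1,2,3} \<and> k < Lf dl i}"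
proof -
  obtain v w where vw: "x = to_nat v" "y = to_nat w" "arcv dl m v w" using assms(2) Ev_iff by blast
  obtain i k where ik: "v = Hv h i k" "i \<in> {1,2,3}" "k < Lf dl i" using assms(3) vw by auto
  from vw(3) consider
      (a) h' i' k' where "Suc k' < Lf dl i'" "v = Hv h' i' k'" "w = Hv h' i' (Suc k')" "i' \<in> {1,2,3}"
    | (b) h' i' j where "j \<in> {1,2,3}" "v = Hv h' i' (Lf dl i' - 1)" "w = Hv h' j 0"
    | (c) j a where "v = Dn j a \<or> v = Pa j a \<or> v = Qa j a"
    unfolding arcv_def by blast
  then show ?thesis
  proof cases
    case a then show ?thesis using ik vw by auto
  next
    case b then show ?thesis using ik vw Lf_pos[OF dl, of j] by auto
  next
    case c then show ?thesis using ik by auto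
  qed
qed



definition tv :: "nat \<Rightarrow> nat \<Rightarrow> nat" where "tv h j = to_nat (Hv h j 0)"
definition SH :: "nat \<Rightarrow> nat \<Rightarrow> nat set" where
  "SH dl h = to_nat ` {Hv h i k | i k. i \<in> {1,2,3} \<and> k < Lf dl i}"

definition rpot :: "nat \<Rightarrow> nat \<Rightarrow> int" where
  "rpot dl x = (case from_nat x of Hv h i k \<Rightarrow> int (Lf dl i) - int k | _ \<Rightarrow> 0)"
definition gpot :: "nat \<Rightarrow> nat \<Rightarrow> int" where
  "gpot dl x = (case from_nat x of Hv h i k \<Rightarrow> (if k = 0 then int (Lf dl i) else 0) | _ \<Rightarrow> 0)"
definition lab :: "nat \<Rightarrow> int" where
  "lab x = (case from_nat x of Hv h i k \<Rightarrow> int i | _ \<Rightarrow> 0)"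

lemma arc_cases:
  assumes dl: "2 \<le> dl" and "(x, y) \<in> Ev dl m" and "x \<in> SH dl h"
  obtains (a) i k where "i \<in> {1,2,3}" "Suc k < Lf dl i" "x = to_nat (Hv h i k)" "y = to_nat (Hv h i (Suc k))"
    | (b) i j where "i \<in> {1,2,3}" "j \<in> {1,2,3}" "i \<noteq> j" "x = to_nat (Hv h i (Lf dl i - 1))" "y = to_nat (Hv h j 0)"
proof -
  obtain v w where vw: "x = to_nat v" "y = to_nat w" "arcv dl m v w" using assms(2) Ev_iff by blast
  obtain i k where ik: "v = Hv h i k" "i \<in> {1,2,3}" "k < Lf dl i" using assms(3) vw unfolding SH_def by auto
  from vw(3) consider
      (a) h' i' k' where "Suc k' < Lf dl i'" "v = Hv h' i' k'" "w = Hv h' i' (Suc k')" "i' \<in> {1,2,3}"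
    | (b) h' i' j where "i' \<in> {1,2,3}" "j \<in> {1,2,3}" "i' \<noteq> j" "v = Hv h' i' (Lf dl i' - 1)" "w = Hv h' j 0"
    | (c) j a where "v = Dn j a \<or> v = Pa j a \<or> v = Qa j a"
    unfolding arcv_def by blast
  then show ?thesis
  proof cases
    case a then show ?thesis using ik vw that(1)[of i' k'] by auto
  next
    case b then show ?thesis using ik vw that(2)[of i' j] by auto
  next
    case c then show ?thesis using ik by auto
  qed
qed

lemma arc_pot:
  assumes dl: "2 \<le> dl" and "(x, y) \<in> Ev dl m" and "x \<in> SH dl h"
  shows "rpot dl x - rpot dl y = 1 - gpot dl y"
proof (rule arc_cases[OF dl assms(2,3)])
  fix i k assume "i \<in> {1,2,3}" "Suc k < Lf dl i" "x = to_nat (Hv h i k)" "y = to_nat (Hv h i (Suc k))"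
  then show ?thesis by (simp add: rpot_def gpot_def)
next
  fix i j assume b: "i \<in> {1,2,3}" "j \<in> {1,2,3}" "i \<noteq> j" "x = to_nat (Hv h i (Lf dl i - 1))" "y = to_nat (Hv h j 0)"
  have "1 \<le> Lf dl i" using Lf_pos[OF dl b(1)] .
  then show ?thesis using b by (simp add: rpot_def gpot_def)
qed

lemma arc_lab:
  assumes dl: "2 \<le> dl" and "(x, y) \<in> Ev dl m" and "x \<in> SH dl h"
  shows "lab y = lab x \<longleftrightarrow> y \<notin> tv h ` {1,2,3}"
proof (rule arc_cases[OF dl assms(2,3)])
  fix i k assume "i \<in> {1,2,3}" "Suc k < Lf dl i" "x = to_nat (Hv h i k)" "y = to_nat (Hv h i (Suc k))"
  then show ?thesis by (auto simp: lab_def tv_def)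
next
  fix i j assume b: "i \<in> {1,2,3}" "j \<in> {1,2,3}" "i \<noteq> j" "x = to_nat (Hv h i (Lf dl i - 1))" "y = to_nat (Hv h j 0)"
  then show ?thesis by (auto simp: lab_def tv_def)
qed

lemma SH_closed: "2 \<le> dl \<Longrightarrow> (x, y) \<in> Ev dl m \<Longrightarrow> x \<in> SH dl h \<Longrightarrow> y \<in> SH dl h"
  unfolding SH_def by (rule hub_closed)

lemma hub_card2:
  assumes dl: "2 \<le> dl" and cyc: "is_cycle (Ev dl m) dl W c"
    and p: "p < length c" "c ! p \<in> SH dl h"
  shows "card {j \<in> {1,2,3}. tv h j \<in> set c} = 2"
proof -
  let ?n = "length c"
  let ?I = "{j \<in> {1,2,3}. tv h j \<in> set c}"
  have npos: "0 < ?n" using p by auto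
  have dist: "distinct c" and len: "?n \<le> dl" using cyc unfolding is_cycle_def by auto
  have sub: "set c \<subseteq> SH dl h"
    using cyc_closure[OF cyc SH_closed[OF dl] p] .
  have inS: "c ! i \<in> SH dl h" if "i < ?n" for i using sub that by auto
  have arcs: "(c ! i, c ! (Suc i mod ?n)) \<in> Ev dl m" if "i < ?n" for i using cyc_arc[OF cyc that] .
  have t1: "(\<Sum>i<?n. rpot dl (c ! (Suc i mod ?n))) = (\<Sum>i<?n. rpot dl (c ! i))"
    using telescope[OF npos, of "\<lambda>j. rpot dl (c ! j)"] by simp
  have t2: "(\<Sum>i<?n. gpot dl (c ! (Suc i mod ?n))) = (\<Sum>i<?n. gpot dl (c ! i))"
    using telescope[OF npos, of "\<lambda>j. gpot dl (c ! j)"] by simp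
  have "(\<Sum>i<?n. rpot dl (c ! i) - rpot dl (c ! (Suc i mod ?n))) = (\<Sum>i<?n. 1 - gpot dl (c ! (Suc i mod ?n)))"
    by (rule sum.cong) (auto intro: arc_pot[OF dl arcs inS])
  then have "0 = int ?n - (\<Sum>i<?n. gpot dl (c ! i))"
    using t1 t2 by (simp add: sum_subtractf)
  then have lenI: "int ?n = sum (gpot dl) (set c)"
    using sum_nth_set[OF dist, of "gpot dl"] by simp
  let ?T = "tv h ` ?I"
  have Tsub: "?T \<subseteq> set c" by auto
  have "sum (gpot dl) ?T = sum (gpot dl) (set c)"
  proof (rule sum.mono_neutral_left)
    show "finite (set c)" by simp
    show "?T \<subseteq> set c" by (rule Tsub)
    show "\<forall>x\<in>set c - ?T. gpot dl x = 0"
    proof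
      fix x assume x: "x \<in> set c - ?T"
      then obtain i k where ik: "x = to_nat (Hv h i k)" "i \<in> {1,2,3}" "k < Lf dl i"
        using sub unfolding SH_def by auto
      show "gpot dl x = 0"
      proof (cases "k = 0")
        case True
        then have "x \<in> ?T" using ik x by (auto simp: tv_def)
        then show ?thesis using x by blast
      qed (simp add: gpot_def ik)
    qed
  qed
  then have "sum (gpot dl) (set c) = sum (gpot dl) ?T" by simp
  also have "\<dots> = (\<Sum>j\<in>?I. gpot dl (tv h j))"
    by (subst sum.reindex) (auto simp: inj_on_def tv_def)
  also have "\<dots> = (\<Sum>j\<in>?I. int (Lf dl j))"
    by (simp add: gpot_def tv_def)
  finally have lenS: "int ?n = (\<Sum>j\<in>?I. int (Lf dl j))" using lenI by simp
  have Isub: "?I \<subseteq> {1,2,3}" by auto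
  have ne: "?I \<noteq> {}"
  proof
    assume e: "?I = {}"
    have "int ?n = 0" using lenS unfolding e by simp
    then show False using npos by simp
  qed
  have nfull: "?I \<noteq> {1,2,3}"
  proof
    assume f: "?I = {1,2,3}"
    have "int ?n = int (Lf dl 1) + int (Lf dl 2) + int (Lf dl 3)" using lenS unfolding f by simp
    then show False using Lf_facts(7)[OF dl] len by linarith
  qed
  have not1: "card ?I \<noteq> 1"
  proof
    assume "card ?I = 1"
    then obtain j0 where Ij: "?I = {j0}" by (auto simp: card_Suc_eq)
    then have j0: "j0 \<in> {1,2,3}" "tv h j0 \<in> set c" by auto
    obtain q where q: "q < ?n" "c ! q = tv h j0" using j0(2) by (auto simp: in_set_conv_nth)
    define i0 where "i0 = (q + ?n - 1) mod ?n"
    have i0: "i0 < ?n" using npos by (simp add: i0_def)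
    have si0: "Suc i0 mod ?n = q"
    proof -
      have "Suc i0 mod ?n = Suc (q + ?n - 1) mod ?n" by (simp add: i0_def mod_Suc_eq)
      also have "Suc (q + ?n - 1) = q + ?n" using npos by simp
      finally show ?thesis using q by simp
    qed
    have tel: "(\<Sum>i<?n. lab (c ! (Suc i mod ?n)) - lab (c ! i)) = 0"
      using telescope[OF npos, of "\<lambda>j. lab (c ! j)"] by (simp add: sum_subtractf)
    have zero: "lab (c ! (Suc i mod ?n)) - lab (c ! i) = 0" if "i < ?n" "i \<noteq> i0" for i
    proof -
      have "Suc i mod ?n \<noteq> q" using suc_mod_inj[OF that(1) i0] si0 that(2) by auto
      then have "c ! (Suc i mod ?n) \<noteq> c ! q"
        using q npos by (subst nth_eq_iff_index_eq[OF dist]) auto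
      then have ne: "c ! (Suc i mod ?n) \<noteq> tv h j0" using q by simp
      have inset: "c ! (Suc i mod ?n) \<in> set c" using npos by simp
      have "c ! (Suc i mod ?n) \<notin> tv h ` {1,2,3}"
      proof
        assume "c ! (Suc i mod ?n) \<in> tv h ` {1,2,3}"
        then obtain j where j: "j \<in> {1,2,3}" "c ! (Suc i mod ?n) = tv h j" by auto
        then have "j \<in> ?I" using inset by auto
        then have "j = j0" unfolding Ij by simp
        then show False using j ne by simp
      qed
      then show ?thesis using arc_lab[OF dl arcs[OF that(1)] inS[OF that(1)]] by simp
    qed
    let ?F = "\<lambda>i. lab (c ! (Suc i mod ?n)) - lab (c ! i)"
    have "(\<Sum>i<?n. ?F i) = ?F i0 + (\<Sum>i\<in>{..<?n} - {i0}. ?F i)"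
      by (rule sum.remove) (auto simp: i0)
    moreover have "(\<Sum>i\<in>{..<?n} - {i0}. ?F i) = 0"
      using zero by (intro sum.neutral) auto
    moreover have "?F i0 \<noteq> 0"
    proof -
      have "c ! (Suc i0 mod ?n) \<in> tv h ` {1,2,3}" using si0 q j0 by auto
      then show ?thesis using arc_lab[OF dl arcs[OF i0] inS[OF i0]] by auto
    qed
    ultimately show False using tel by simp
  qed
  have "card ?I \<le> 3"
    using card_mono[OF _ Isub] by simp
  moreover have "card ?I \<noteq> 3"
  proof
    assume "card ?I = 3"
    then have "?I = {1,2,3}" using card_subset_eq[OF _ Isub] by simp
    then show False using nfull by simp
  qed
  moreover have "card ?I \<noteq> 0" using ne by simp
  ultimately show ?thesis using not1 by linarith
qed



definition cov :: "nat list set \<Rightarrow> nat set" where "cov Y = (\<Union>c\<in>Y. set c)"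

lemma star_succ:
  assumes "(x, y) \<in> Ev dl m" "x = to_nat (Pa j a) \<or> x = to_nat (Qa j a)"
  shows "y = to_nat (Dn j a)"
proof -
  obtain v w where vw: "x = to_nat v" "y = to_nat w" "arcv dl m v w" using assms(1) Ev_iff by blast
  have v: "v = Pa j a \<or> v = Qa j a" using assms(2) vw(1) by auto
  show ?thesis using vw(3) v vw(2) unfolding arcv_def by auto
qed

lemma hub_excl:
  assumes dl: "2 \<le> dl" and ex: "exchange (Ev dl m) dl W Y"
  shows "card (tv h ` {1,2,3} \<inter> cov Y) \<le> 2"
proof (rule ccontr)
  assume "\<not> ?thesis"
  then have c3: "card (tv h ` {1,2,3} \<inter> cov Y) \<ge> 3" by simp
  have fin: "finite (tv h ` {1,2,3})" by simp
  have "card (tv h ` {1,2,3}) \<le> 3" by (rule order_trans[OF card_image_le]) auto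
  then have "card (tv h ` {1,2,3} \<inter> cov Y) = card (tv h ` {1,2,3})"
    using c3 card_mono[OF fin, of "tv h ` {1,2,3} \<inter> cov Y"] by auto
  then have allc: "tv h ` {1,2,3} \<subseteq> cov Y"
    using card_subset_eq[OF fin, of "tv h ` {1,2,3} \<inter> cov Y"] by auto
  have cyc: "\<And>c. c \<in> Y \<Longrightarrow> is_cycle (Ev dl m) dl W c" and
    disj: "\<And>c c'. c \<in> Y \<Longrightarrow> c' \<in> Y \<Longrightarrow> c \<noteq> c' \<Longrightarrow> set c \<inter> set c' = {}"
    using ex unfolding exchange_def by auto
  have tvSH: "tv h j \<in> SH dl h" if "j \<in> {1,2,3}" for j
    using Lf_pos[OF dl that] that unfolding SH_def tv_def by force
  have card2: "card {j \<in> {1,2,3}. tv h j \<in> set c} = 2" if as: "c \<in> Y" "tv h j \<in> set c" "j \<in> {1,2,3}" for c j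
  proof -
    obtain p where "p < length c" "c ! p = tv h j" using as(2) by (auto simp: in_set_conv_nth)
    then show ?thesis using hub_card2[OF dl cyc[OF as(1)], of p h] tvSH[OF as(3)] by simp
  qed
  obtain c1 where c1: "c1 \<in> Y" "tv h 1 \<in> set c1" using allc unfolding cov_def by auto
  let ?I1 = "{j \<in> {1,2,3}. tv h j \<in> set c1}"
  have I1: "card ?I1 = 2" using card2[OF c1] by simp
  have "?I1 \<noteq> {1,2,3}" using I1 by auto
  then obtain j where j: "j \<in> {1,2,3}" "tv h j \<notin> set c1" by auto
  obtain c2 where c2: "c2 \<in> Y" "tv h j \<in> set c2" using allc j(1) unfolding cov_def by auto
  let ?I2 = "{j \<in> {1,2,3}. tv h j \<in> set c2}"
  have I2: "card ?I2 = 2" using card2[OF c2 j(1)] by simp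
  have "c1 \<noteq> c2" using j c2 by auto
  then have "set c1 \<inter> set c2 = {}" using disj c1 c2 by auto
  then have dj: "?I1 \<inter> ?I2 = {}" by auto
  have "card (?I1 \<union> ?I2) = 4" using card_Un_disjoint[OF _ _ dj] I1 I2 by simp
  moreover have "card (?I1 \<union> ?I2) \<le> card {1,2,3::nat}"
    by (rule card_mono) auto
  moreover have "card {1,2,3::nat} = 3" by simp
  ultimately show False by simp
qed

lemma star_excl:
  assumes ex: "exchange (Ev dl m) dl W Y"
  shows "card ({to_nat (Pa j a), to_nat (Qa j a)} \<inter> cov Y) \<le> 1"
proof (rule ccontr)
  assume "\<not> ?thesis"
  then have c2: "card ({to_nat (Pa j a), to_nat (Qa j a)} \<inter> cov Y) \<ge> 2" by simp
  have "card ({to_nat (Pa j a), to_nat (Qa j a)} \<inter> cov Y) \<le> card {to_nat (Pa j a), to_nat (Qa j a)}"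
    by (rule card_mono) auto
  moreover have "card {to_nat (Pa j a), to_nat (Qa j a)} \<le> 2" by (simp add: card_insert_le_m1)
  ultimately have "{to_nat (Pa j a), to_nat (Qa j a)} \<inter> cov Y = {to_nat (Pa j a), to_nat (Qa j a)}"
    using c2 card_subset_eq[of "{to_nat (Pa j a), to_nat (Qa j a)}" "{to_nat (Pa j a), to_nat (Qa j a)} \<inter> cov Y"]
    by auto
  then have both: "to_nat (Pa j a) \<in> cov Y" "to_nat (Qa j a) \<in> cov Y" by auto
  have cyc: "\<And>c. c \<in> Y \<Longrightarrow> is_cycle (Ev dl m) dl W c" and
    disj: "\<And>c c'. c \<in> Y \<Longrightarrow> c' \<in> Y \<Longrightarrow> c \<noteq> c' \<Longrightarrow> set c \<inter> set c' = {}"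
    using ex unfolding exchange_def by auto
  obtain c1 where c1: "c1 \<in> Y" "to_nat (Pa j a) \<in> set c1" using both unfolding cov_def by auto
  obtain c2 where c2: "c2 \<in> Y" "to_nat (Qa j a) \<in> set c2" using both unfolding cov_def by auto
  obtain p1 where p1: "p1 < length c1" "c1 ! p1 = to_nat (Pa j a)" using c1 by (auto simp: in_set_conv_nth)
  obtain p2 where p2: "p2 < length c2" "c2 ! p2 = to_nat (Qa j a)" using c2 by (auto simp: in_set_conv_nth)
  have s1: "c1 ! (Suc p1 mod length c1) = to_nat (Dn j a)"
    using star_succ[OF cyc_arc[OF cyc[OF c1(1)] p1(1)]] p1 by simp
  have s2: "c2 ! (Suc p2 mod length c2) = to_nat (Dn j a)"
    using star_succ[OF cyc_arc[OF cyc[OF c2(1)] p2(1)]] p2 by simp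
  have "to_nat (Dn j a) \<in> set c1" using s1 p1 by (metis nth_mem mod_less_divisor gr_implies_not0 not_gr0 length_0_conv less_nat_zero_code)
  moreover have "to_nat (Dn j a) \<in> set c2" using s2 p2 by (metis nth_mem mod_less_divisor gr_implies_not0 not_gr0 length_0_conv less_nat_zero_code)
  ultimately have eq: "c1 = c2" using disj c1 c2 by blast
  have dist: "distinct c1" using cyc[OF c1(1)] unfolding is_cycle_def by auto
  have n0: "0 < length c1" using p1 by auto
  have "Suc p1 mod length c1 = Suc p2 mod length c1"
    using s1 s2 eq n0 by (subst nth_eq_iff_index_eq[OF dist, symmetric]) auto
  then have "p1 = p2" using suc_mod_inj p1 p2 eq by auto
  then show False using p1 p2 eq by simp
qed



definition Upat :: "nat \<Rightarrow> nat \<Rightarrow> nat set" where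
  "Upat dl m = to_nat ` {v \<in> Vall dl m. patv v}"

lemma Lf_le: "Lf dl i \<le> dl" by (auto simp: Lf_def)

lemma hubV_sub: "hubV dl m \<subseteq> (\<lambda>(h,i,k). Hv h i k) ` ({..<2*m} \<times> {1,2,3} \<times> {..<dl})"
proof
  fix v assume "v \<in> hubV dl m"
  then obtain h i k where "v = Hv h i k" "h < 2*m" "i \<in> {1,2,3}" "k < Lf dl i" unfolding hubV_def by auto
  then show "v \<in> (\<lambda>(h,i,k). Hv h i k) ` ({..<2*m} \<times> {1,2,3} \<times> {..<dl})"
    using Lf_le[of dl i] by (auto intro!: image_eqI[where x="(h,i,k)"])
qed

lemma starV_eq: "starV m = (\<lambda>(j,a). Dn j a) ` ({..<m} \<times> {1,2,3}) \<union> (\<lambda>(j,a). Pa j a) ` ({..<m} \<times> {1,2,3})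
   \<union> (\<lambda>(j,a). Qa j a) ` ({..<m} \<times> {1,2,3})"
  unfolding starV_def by auto

lemma finite_Vall: "finite (Vall dl m)"
proof -
  have "finite (hubV dl m)" by (rule finite_subset[OF hubV_sub]) auto
  moreover have "finite (starV m)" unfolding starV_eq by auto
  ultimately show ?thesis unfolding Vall_def by auto
qed

lemma card_Vall: "card (Vall dl m) \<le> 6*m*dl + 9*m"
proof -
  have "card (hubV dl m) \<le> card ((\<lambda>(h,i,k). Hv h i k) ` ({..<2*m} \<times> {1,2,3::nat} \<times> {..<dl}))"
    by (rule card_mono[OF _ hubV_sub]) auto
  also have "\<dots> \<le> card ({..<2*m} \<times> {1,2,3::nat} \<times> {..<dl})" by (rule card_image_le) auto
  also have "\<dots> = 6*m*dl" by (simp add: card_cartesian_product)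
  finally have h: "card (hubV dl m) \<le> 6*m*dl" .
  have c3: "card ({..<m} \<times> {1,2,3::nat}) = 3*m" by (simp add: card_cartesian_product)
  have "card (starV m) \<le> card ((\<lambda>(j,a). Dn j a) ` ({..<m} \<times> {1,2,3})) + card ((\<lambda>(j,a). Pa j a) ` ({..<m} \<times> {1,2,3}))
   + card ((\<lambda>(j,a). Qa j a) ` ({..<m} \<times> {1,2,3}))"
    unfolding starV_eq by (rule order_trans[OF card_Un_le]) (simp add: card_Un_le)
  also have "\<dots> \<le> 3*m + 3*m + 3*m"
  proof -
    have f: "finite ({..<m} \<times> {1,2,3::nat})" by simp
    have "card ((\<lambda>(j,a). Dn j a) ` ({..<m} \<times> {1,2,3})) \<le> 3*m" using card_image_le[OF f] c3 by metis
    moreover have "card ((\<lambda>(j,a). Pa j a) ` ({..<m} \<times> {1,2,3})) \<le> 3*m" using card_image_le[OF f] c3 by metis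
    moreover have "card ((\<lambda>(j,a). Qa j a) ` ({..<m} \<times> {1,2,3})) \<le> 3*m" using card_image_le[OF f] c3 by metis
    ultimately show ?thesis by linarith
  qed
  finally have s: "card (starV m) \<le> 9*m" by simp
  have "card (Vall dl m) \<le> card (hubV dl m) + card (starV m)" unfolding Vall_def by (rule card_Un_le)
  then show ?thesis using h s by simp
qed

lemma Upat_sub: "Upat dl m \<subseteq> (\<Union>h\<in>{..<2*m}. tv h ` {1,2,3}) \<union>
    (\<Union>j\<in>{..<m}. \<Union>a\<in>{1,2,3}. {to_nat (Pa j a), to_nat (Qa j a)})"
proof
  fix x assume "x \<in> Upat dl m"
  then obtain v where v: "x = to_nat v" "v \<in> Vall dl m" "patv v" unfolding Upat_def by auto
  show "x \<in> (\<Union>h\<in>{..<2*m}. tv h ` {1,2,3}) \<union> (\<Union>j\<in>{..<m}. \<Union>a\<in>{1,2,3}. {to_nat (Pa j a), to_nat (Qa j a)})"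
  proof (cases v)
    case (Hv h i k) then show ?thesis using v unfolding Vall_def hubV_def starV_def tv_def by auto
  next
    case (Dn j a) then show ?thesis using v by simp
  next
    case (Pa j a) then show ?thesis using v unfolding Vall_def hubV_def starV_def by auto
  next
    case (Qa j a) then show ?thesis using v unfolding Vall_def hubV_def starV_def by auto
  qed
qed

lemma count_E:
  assumes dl: "2 \<le> dl" and ex: "exchange (Ev dl m) dl W Y"
  shows "card (Upat dl m \<inter> cov Y) \<le> 7*m"
proof -
  define A where "A = (\<Union>h\<in>{..<2*m}. tv h ` {1,2,3} \<inter> cov Y)"
  define B where "B = (\<Union>j\<in>{..<m}. \<Union>a\<in>{1,2,3::nat}. {to_nat (Pa j a), to_nat (Qa j a)} \<inter> cov Y)"
  have sub: "Upat dl m \<inter> cov Y \<subseteq> A \<union> B"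
  proof
    fix x assume x: "x \<in> Upat dl m \<inter> cov Y"
    then have xc: "x \<in> cov Y" and xu: "x \<in> Upat dl m" by simp_all
    have "x \<in> (\<Union>h\<in>{..<2*m}. tv h ` {1,2,3}) \<union> (\<Union>j\<in>{..<m}. \<Union>a\<in>{1,2,3}. {to_nat (Pa j a), to_nat (Qa j a)})"
      by (rule subsetD[OF Upat_sub xu])
    then show "x \<in> A \<union> B"
    proof
      assume "x \<in> (\<Union>h\<in>{..<2*m}. tv h ` {1,2,3})"
      then obtain h where "h \<in> {..<2*m}" "x \<in> tv h ` {1,2,3}" by (rule UN_E)
      then have "x \<in> A" unfolding A_def using xc by (intro UN_I[of h]) auto
      then show ?thesis by (rule UnI1)
    next
      assume "x \<in> (\<Union>j\<in>{..<m}. \<Union>a\<in>{1,2,3}. {to_nat (Pa j a), to_nat (Qa j a)})"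
      then obtain j where j: "j \<in> {..<m}" "x \<in> (\<Union>a\<in>{1,2,3}. {to_nat (Pa j a), to_nat (Qa j a)})" by (rule UN_E)
      from j(2) obtain a where a: "a \<in> {1,2,3}" "x \<in> {to_nat (Pa j a), to_nat (Qa j a)}" by (rule UN_E)
      have "x \<in> B" unfolding B_def using xc j(1) a by (intro UN_I[of j] UN_I[of a]) auto
      then show ?thesis by (rule UnI2)
    qed
  qed
  have finA: "finite A" unfolding A_def by (intro finite_UN_I) auto
  have finB: "finite B" unfolding B_def by (intro finite_UN_I) auto
  have "card A \<le> (\<Sum>h<2*m. card (tv h ` {1,2,3} \<inter> cov Y))" unfolding A_def by (rule card_UN_le) simp
  also have "\<dots> \<le> (\<Sum>h<2*m. 2)" by (rule sum_mono) (rule hub_excl[OF dl ex])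
  finally have cA: "card A \<le> 4*m" by simp
  have "card B \<le> (\<Sum>j<m. card (\<Union>a\<in>{1,2,3::nat}. {to_nat (Pa j a), to_nat (Qa j a)} \<inter> cov Y))"
    unfolding B_def by (rule card_UN_le) simp
  also have "\<dots> \<le> (\<Sum>j<m. 3)"
  proof (rule sum_mono)
    fix j
    have "card (\<Union>a\<in>{1,2,3::nat}. {to_nat (Pa j a), to_nat (Qa j a)} \<inter> cov Y)
        \<le> (\<Sum>a\<in>{1,2,3::nat}. card ({to_nat (Pa j a), to_nat (Qa j a)} \<inter> cov Y))"
      by (rule card_UN_le) simp
    also have "\<dots> \<le> (\<Sum>a\<in>{1,2,3::nat}. 1)" by (rule sum_mono) (rule star_excl[OF ex])
    finally show "card (\<Union>a\<in>{1,2,3::nat}. {to_nat (Pa j a), to_nat (Qa j a)} \<inter> cov Y) \<le> 3" by simp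
  qed
  finally have cB: "card B \<le> 3*m" by simp
  have "card (Upat dl m \<inter> cov Y) \<le> card (A \<union> B)" by (rule card_mono[OF _ sub]) (use finA finB in simp)
  also have "\<dots> \<le> card A + card B" by (rule card_Un_le)
  finally show ?thesis using cA cB by simp
qed

lemma supp_split:
  assumes ex: "exchange (supp_graph V E V0 Out) dl (V \<union> V0) X" and dj: "V0 \<inter> V = {}"
  shows "exchange E dl V {c \<in> X. set c \<inter> V0 = {}}"
  unfolding exchange_def
proof (intro conjI ballI impI)
  fix c assume c: "c \<in> {c \<in> X. set c \<inter> V0 = {}}"
  then have cyc: "is_cycle (supp_graph V E V0 Out) dl (V \<union> V0) c" and nv: "set c \<inter> V0 = {}"
    using ex unfolding exchange_def by auto
  show "is_cycle E dl V c"
    unfolding is_cycle_def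
  proof (intro conjI allI impI)
    show "c \<noteq> []" "distinct c" "length c \<le> dl" using cyc unfolding is_cycle_def by auto
    have "set c \<subseteq> V \<union> V0" using cyc unfolding is_cycle_def by simp
    then show "set c \<subseteq> V" using nv by blast
    fix i assume i: "i < length c"
    have a: "(c ! i, c ! ((i + 1) mod length c)) \<in> supp_graph V E V0 Out" using cyc i unfolding is_cycle_def by simp
    have "c ! i \<in> set c" using i by (rule nth_mem)
    then have m1: "c ! i \<notin> V0" using nv by blast
    have "0 < length c" using i by linarith
    then have "(i + 1) mod length c < length c" by simp
    then have "c ! ((i + 1) mod length c) \<in> set c" by (rule nth_mem)
    then have m2: "c ! ((i + 1) mod length c) \<notin> V0" using nv by blast
    show "(c ! i, c ! ((i + 1) mod length c)) \<in> E" using a m1 m2 unfolding supp_graph_def by blast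
  qed
next
  fix c c' assume "c \<in> {c \<in> X. set c \<inter> V0 = {}}" "c' \<in> {c \<in> X. set c \<inter> V0 = {}}" "c \<noteq> c'"
  then show "set c \<inter> set c' = {}" using ex unfolding exchange_def by simp
qed

lemma alt_bound:
  assumes ex: "exchange G dl W X" and fin: "finite V0"
  shows "card (cov {c \<in> X. set c \<inter> V0 \<noteq> {}}) \<le> dl * card V0"
    "finite {c \<in> X. set c \<inter> V0 \<noteq> {}}"
proof -
  let ?Z = "{c \<in> X. set c \<inter> V0 \<noteq> {}}"
  define f where "f c = (SOME a. a \<in> set c \<inter> V0)" for c
  have fz: "f c \<in> set c \<inter> V0" if "c \<in> ?Z" for c
  proof -
    have "\<exists>a. a \<in> set c \<inter> V0" using that by auto
    then show ?thesis unfolding f_def by (rule someI_ex)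
  qed
  have disj: "\<And>c c'. c \<in> X \<Longrightarrow> c' \<in> X \<Longrightarrow> c \<noteq> c' \<Longrightarrow> set c \<inter> set c' = {}"
    using ex unfolding exchange_def by auto
  have inj: "inj_on f ?Z"
  proof (rule inj_onI)
    fix c c' assume "c \<in> ?Z" "c' \<in> ?Z" "f c = f c'"
    then show "c = c'" using fz[of c] fz[of c'] disj[of c c'] by auto
  qed
  have img: "f ` ?Z \<subseteq> V0" using fz by auto
  have cz: "card ?Z \<le> card V0" by (rule card_inj_on_le[OF inj img fin])
  show finZ: "finite ?Z" using finite_imageD[OF finite_subset[OF img fin] inj] .
  have "card (cov ?Z) \<le> (\<Sum>c\<in>?Z. card (set c))" unfolding cov_def by (rule card_UN_le[OF finZ])
  also have "\<dots> \<le> (\<Sum>c\<in>?Z. dl)"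
  proof (rule sum_mono)
    fix c assume "c \<in> ?Z"
    then have "length c \<le> dl" using ex unfolding exchange_def is_cycle_def by auto
    then show "card (set c) \<le> dl" using card_length[of c] by linarith
  qed
  also have "\<dots> = dl * card ?Z" by simp
  also have "\<dots> \<le> dl * card V0" using cz by simp
  finally show "card (cov ?Z) \<le> dl * card V0" .
qed



definition hc :: "nat \<Rightarrow> nat \<Rightarrow> nat \<Rightarrow> nat \<Rightarrow> nat list" where
  "hc dl h a b = map (\<lambda>k. to_nat (Hv h a k)) [0..<Lf dl a] @ map (\<lambda>k. to_nat (Hv h b k)) [0..<Lf dl b]"

lemma hc_nth1: "i < Lf dl a \<Longrightarrow> hc dl h a b ! i = to_nat (Hv h a i)"
  unfolding hc_def by (simp add: nth_append)

lemma hc_nth2: "Lf dl a \<le> i \<Longrightarrow> i < Lf dl a + Lf dl b \<Longrightarrow> hc dl h a b ! i = to_nat (Hv h b (i - Lf dl a))"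
proof -
  assume "Lf dl a \<le> i" "i < Lf dl a + Lf dl b"
  then have "i - Lf dl a < Lf dl b" by linarith
  then show ?thesis unfolding hc_def using \<open>Lf dl a \<le> i\<close> by (simp add: nth_append)
qed

lemma hc_len: "length (hc dl h a b) = Lf dl a + Lf dl b"
  unfolding hc_def by simp

lemma hc_set: "set (hc dl h a b) = (\<lambda>k. to_nat (Hv h a k)) ` {..<Lf dl a} \<union> (\<lambda>k. to_nat (Hv h b k)) ` {..<Lf dl b}"
  unfolding hc_def by auto

lemma arc_in: "arcv dl m v w \<Longrightarrow> (to_nat v, to_nat w) \<in> Ev dl m"
  unfolding Ev_def by auto

lemma arcv_I1: "h < 2*m \<Longrightarrow> i \<in> {1,2,3} \<Longrightarrow> Suc k < Lf dl i \<Longrightarrow> arcv dl m (Hv h i k) (Hv h i (Suc k))"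
  unfolding arcv_def by blast
lemma arcv_I2: "h < 2*m \<Longrightarrow> i \<in> {1,2,3} \<Longrightarrow> j \<in> {1,2,3} \<Longrightarrow> i \<noteq> j \<Longrightarrow> arcv dl m (Hv h i (Lf dl i - 1)) (Hv h j 0)"
  unfolding arcv_def by blast
lemma arcv_I3: "j < m \<Longrightarrow> a \<in> {1,2,3} \<Longrightarrow> w = Pa j a \<or> w = Qa j a \<Longrightarrow> arcv dl m (Dn j a) w"
  unfolding arcv_def by blast
lemma arcv_I4: "j < m \<Longrightarrow> a \<in> {1,2,3} \<Longrightarrow> w = Pa j a \<or> w = Qa j a \<Longrightarrow> arcv dl m w (Dn j a)"
  unfolding arcv_def by blast

lemma hc_cycle:
  assumes dl: "2 \<le> dl" and h: "h < 2*m" and ab: "a \<in> {1,2,3}" "b \<in> {1,2,3}" "a \<noteq> b"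
    and len: "Lf dl a + Lf dl b \<le> dl" and W: "set (hc dl h a b) \<subseteq> W"
  shows "is_cycle (Ev dl m) dl W (hc dl h a b)"
proof -
  let ?c = "hc dl h a b"
  let ?La = "Lf dl a" and ?Lb = "Lf dl b"
  have La: "1 \<le> ?La" using Lf_pos[OF dl ab(1)] .
  have Lb: "1 \<le> ?Lb" using Lf_pos[OF dl ab(2)] .
  have dist: "distinct ?c"
    unfolding hc_def using ab(3) by (auto simp: distinct_map inj_on_def)
  have arcs: "(?c ! i, ?c ! ((i + 1) mod length ?c)) \<in> Ev dl m" if i: "i < length ?c" for i
  proof -
    have il: "i < ?La + ?Lb" using i hc_len by simp
    consider (p1) "Suc i < ?La" | (p2) "Suc i = ?La" | (p3) "?La \<le> i" "Suc i < ?La + ?Lb" | (p4) "Suc i = ?La + ?Lb"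
      using il by linarith
    then show ?thesis
    proof cases
      case p1
      have "arcv dl m (Hv h a i) (Hv h a (Suc i))" using arcv_I1[OF h ab(1) p1] .
      then show ?thesis using p1 hc_nth1[of i dl a h b] hc_nth1[of "Suc i" dl a h b] hc_len[of dl h a b]
        by (simp add: arc_in)
    next
      case p2
      have "arcv dl m (Hv h a (?La - 1)) (Hv h b 0)" using arcv_I2[OF h ab] .
      moreover have "i = ?La - 1" using p2 by simp
      moreover have "?c ! Suc i = to_nat (Hv h b 0)" using hc_nth2[of dl a "Suc i" b h] p2 Lb by simp
      moreover have "Suc i mod length ?c = Suc i" using p2 Lb hc_len[of dl h a b] by simp
      ultimately show ?thesis using hc_nth1[of i dl a h b] p2 by (simp add: arc_in)
    next
      case p3
      have e: "Suc i - ?La = Suc (i - ?La)" using p3 by simp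
      have "Suc (i - ?La) < ?Lb" using p3 by linarith
      then have "arcv dl m (Hv h b (i - ?La)) (Hv h b (Suc (i - ?La)))" using arcv_I1[OF h ab(2)] by blast
      then show ?thesis using p3 hc_nth2[of dl a i b h] hc_nth2[of dl a "Suc i" b h] hc_len[of dl h a b] e
        by (simp add: arc_in)
    next
      case p4
      have "arcv dl m (Hv h b (?Lb - 1)) (Hv h a 0)" using arcv_I2[OF h ab(2) ab(1)] ab(3) by blast
      moreover have "i - ?La = ?Lb - 1" using p4 by simp
      moreover have "Suc i mod length ?c = 0" using p4 hc_len[of dl h a b] by simp
      moreover have "?c ! 0 = to_nat (Hv h a 0)" using hc_nth1[of 0 dl a h b] La by simp
      moreover have "?La \<le> i" using p4 Lb by linarith
      then have "?c ! i = to_nat (Hv h b (i - ?La))" using hc_nth2[of dl a i b h] p4 by simp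
      ultimately show ?thesis by (simp add: arc_in)
    qed
  qed
  show ?thesis unfolding is_cycle_def
    using dist arcs W len hc_len[of dl h a b] La by auto
qed

lemma sc_cycle:
  assumes dl: "2 \<le> dl" and j: "j < m" and a: "a \<in> {1,2,3}" and w: "w = Pa j a \<or> w = Qa j a"
    and W: "to_nat (Dn j a) \<in> W" "to_nat w \<in> W"
  shows "is_cycle (Ev dl m) dl W [to_nat (Dn j a), to_nat w]"
proof -
  have a1: "arcv dl m (Dn j a) w" using arcv_I3[OF j a w] .
  have a2: "arcv dl m w (Dn j a)" using arcv_I4[OF j a w] .
  have ne: "to_nat (Dn j a) \<noteq> to_nat w" using w by auto
  let ?c = "[to_nat (Dn j a), to_nat w]"
  have "\<forall>i<length ?c. (?c ! i, ?c ! ((i + 1) mod length ?c)) \<in> Ev dl m"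
  proof (intro allI impI)
    fix i :: nat assume "i < length ?c"
    then have "i = 0 \<or> i = 1" by auto
    then show "(?c ! i, ?c ! ((i + 1) mod length ?c)) \<in> Ev dl m"
      using arc_in[OF a1] arc_in[OF a2] by auto
  qed
  moreover have "length ?c \<le> dl" using dl by simp
  ultimately show ?thesis unfolding is_cycle_def using ne W by auto
qed

lemma exchange_own:
  assumes "\<And>c. c \<in> X \<Longrightarrow> is_cycle E dl W c"
    and "\<And>c x. c \<in> X \<Longrightarrow> x \<in> set c \<Longrightarrow> g x = c"
  shows "exchange E dl W X"
  unfolding exchange_def using assms by blast



lemma nxt_in: "a \<in> {1,2,3} \<Longrightarrow> nxt a \<in> {1,2,3}" by (auto simp: nxt_def)
lemma nxt_ne: "a \<in> {1,2,3} \<Longrightarrow> nxt a \<noteq> a" by (auto simp: nxt_def)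

lemma orgv_in: assumes "v \<in> Vall dl m" shows "orgv v \<in> {1,2,3}"
proof (cases v)
  case (Hv h i k) then show ?thesis using assms unfolding Vall_def hubV_def starV_def by auto
next
  case (Dn j a) then show ?thesis using assms unfolding Vall_def hubV_def starV_def by auto
next
  case (Pa j a) then show ?thesis using assms unfolding Vall_def hubV_def starV_def by auto
next
  case (Qa j a)
  then have "a \<in> {1,2,3}" using assms unfolding Vall_def hubV_def starV_def by auto
  then show ?thesis using Qa nxt_in by simp
qed

lemma econV: "econ_V 3 (VoF dl m) = to_nat ` Vall dl m"
proof
  show "econ_V 3 (VoF dl m) \<subseteq> to_nat ` Vall dl m" unfolding econ_V_def VoF_def by blast
  show "to_nat ` Vall dl m \<subseteq> econ_V 3 (VoF dl m)"
  proof
    fix x assume "x \<in> to_nat ` Vall dl m"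
    then obtain v where v: "v \<in> Vall dl m" "x = to_nat v" by blast
    have "orgv v \<in> {1..3}" using orgv_in[OF v(1)] by auto
    then show "x \<in> econ_V 3 (VoF dl m)" unfolding econ_V_def VoF_def using v by blast
  qed
qed

lemma hubV_mem: "h < 2*m \<Longrightarrow> i \<in> {1,2,3} \<Longrightarrow> k < Lf dl i \<Longrightarrow> Hv h i k \<in> Vall dl m"
  unfolding Vall_def hubV_def by blast
lemma starV_mem: "j < m \<Longrightarrow> a \<in> {1,2,3} \<Longrightarrow> v = Dn j a \<or> v = Pa j a \<or> v = Qa j a \<Longrightarrow> v \<in> Vall dl m"
  unfolding Vall_def starV_def by blast

lemma arcv_Vall: assumes "arcv dl m v w" "2 \<le> dl" shows "v \<in> Vall dl m \<and> w \<in> Vall dl m"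
proof -
  from assms(1) consider
      (a) h i k where "h < 2*m" "i \<in> {1,2,3}" "Suc k < Lf dl i" "v = Hv h i k" "w = Hv h i (Suc k)"
    | (b) h i j where "h < 2*m" "i \<in> {1,2,3}" "j \<in> {1,2,3}" "v = Hv h i (Lf dl i - 1)" "w = Hv h j 0"
    | (c) j a where "j < m" "a \<in> {1,2,3}" "v = Dn j a \<or> v = Pa j a \<or> v = Qa j a" "w = Dn j a \<or> w = Pa j a \<or> w = Qa j a"
    unfolding arcv_def by blast
  then show ?thesis
  proof cases
    case a
    have "k < Lf dl i" using a(3) by simp
    then show ?thesis using a hubV_mem by blast
  next
    case b
    have "Lf dl i - 1 < Lf dl i" "0 < Lf dl j" using Lf_pos[OF assms(2) b(2)] Lf_pos[OF assms(2) b(3)] by auto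
    then show ?thesis using b hubV_mem by blast
  next
    case c then show ?thesis using starV_mem by blast
  qed
qed

lemma arcv_irrefl: "\<not> arcv dl m v v"
  unfolding arcv_def by auto

lemma valid: assumes dl: "2 \<le> dl" shows "valid_economy 3 (VoF dl m) (UoF dl m) (Ev dl m)"
  unfolding valid_economy_def
proof (intro conjI ballI impI allI)
  fix i assume "i \<in> {1..3::nat}"
  show "finite (VoF dl m i)" unfolding VoF_def using finite_Vall by auto
  show "UoF dl m i \<subseteq> VoF dl m i" unfolding VoF_def UoF_def by auto
next
  fix i j assume "i \<in> {1..3::nat}" "j \<in> {1..3::nat}" "i \<noteq> j"
  then show "VoF dl m i \<inter> VoF dl m j = {}" unfolding VoF_def by auto
next
  show "Ev dl m \<subseteq> econ_V 3 (VoF dl m) \<times> econ_V 3 (VoF dl m)"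
  proof
    fix p assume "p \<in> Ev dl m"
    then obtain v w where "p = (to_nat v, to_nat w)" "arcv dl m v w" unfolding Ev_def by blast
    then show "p \<in> econ_V 3 (VoF dl m) \<times> econ_V 3 (VoF dl m)" unfolding econV using arcv_Vall[OF _ dl] by blast
  qed
next
  fix v show "(v, v) \<notin> Ev dl m" unfolding Ev_def using arcv_irrefl by auto
qed

lemma card_V_le: "card (econ_V 3 (VoF dl m)) \<le> 6*m*dl + 9*m"
  unfolding econV by (rule order_trans[OF card_image_le[OF finite_Vall] card_Vall])

lemma card_V_ge: "m \<le> card (econ_V 3 (VoF dl m))"
proof -
  have sub: "(\<lambda>j. to_nat (Pa j 1)) ` {..<m} \<subseteq> to_nat ` Vall dl m"
    unfolding Vall_def starV_def by auto
  have "card ((\<lambda>j. to_nat (Pa j 1)) ` {..<m}) = m" by (subst card_image) (auto simp: inj_on_def)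
  then show ?thesis unfolding econV using card_mono[OF finite_imageI[OF finite_Vall] sub] by simp
qed

lemma util_ge:
  assumes "K \<subseteq> U \<inter> (\<Union>c\<in>X. set c)" "finite U"
  shows "card K \<le> utility U X"
  unfolding utility_def using assms by (meson card_mono finite_Int)

lemma UoF_fin: "finite (UoF dl m i)" unfolding UoF_def using finite_Vall by auto

lemma mem_hub: "2 \<le> dl \<Longrightarrow> h < 2*m \<Longrightarrow> a \<in> {1,2,3} \<Longrightarrow> k < Lf dl a \<Longrightarrow> to_nat (Hv h a k) \<in> VoF dl m a"
  unfolding VoF_def Vall_def hubV_def by auto
lemma mem_D: "j < m \<Longrightarrow> a \<in> {1,2,3} \<Longrightarrow> to_nat (Dn j a) \<in> VoF dl m a"
  unfolding VoF_def Vall_def starV_def by auto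
lemma mem_P: "j < m \<Longrightarrow> a \<in> {1,2,3} \<Longrightarrow> to_nat (Pa j a) \<in> VoF dl m a"
  unfolding VoF_def Vall_def starV_def by auto
lemma mem_Q: "j < m \<Longrightarrow> a \<in> {1,2,3} \<Longrightarrow> to_nat (Qa j a) \<in> VoF dl m (nxt a)"
  unfolding VoF_def Vall_def starV_def by auto
lemma pat_hub: "2 \<le> dl \<Longrightarrow> h < 2*m \<Longrightarrow> a \<in> {1,2,3} \<Longrightarrow> tv h a \<in> UoF dl m a"
  unfolding UoF_def Vall_def hubV_def tv_def using Lf_pos[of dl a] by force
lemma pat_P: "j < m \<Longrightarrow> a \<in> {1,2,3} \<Longrightarrow> to_nat (Pa j a) \<in> UoF dl m a"
  unfolding UoF_def Vall_def starV_def by auto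
lemma pat_Q: "j < m \<Longrightarrow> a \<in> {1,2,3} \<Longrightarrow> to_nat (Qa j a) \<in> UoF dl m (nxt a)"
  unfolding UoF_def Vall_def starV_def by auto

lemma nxt_vals: "nxt 1 = 2" "nxt 2 = 3" "nxt 3 = 1" by (simp_all add: nxt_def)

lemma Lf_pair: assumes "2 \<le> dl" "a \<in> {1,2,3}" shows "Lf dl a + Lf dl (nxt a) \<le> dl"
proof -
  have f: "Lf dl 1 + Lf dl 2 \<le> dl" "Lf dl 2 + Lf dl 3 \<le> dl" "Lf dl 3 + Lf dl 1 \<le> dl"
    using Lf_facts[OF assms(1)] by linarith+
  consider "a = 1" | "a = 2" | "a = 3" using assms(2) by blast
  then show ?thesis
  proof cases
    case 1 then show ?thesis using f(1) by (simp only: nxt_vals)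
  next
    case 2 then show ?thesis using f(2) by (simp only: nxt_vals)
  next
    case 3 then show ?thesis using f(3) by (simp only: nxt_vals)
  qed
qed



definition own :: "nat \<Rightarrow> nat \<Rightarrow> nat \<Rightarrow> bool \<Rightarrow> nat \<Rightarrow> nat list" where
  "own dl a b q x = (case from_nat x of
      Hv h i k \<Rightarrow> hc dl h a b
    | Dn j a' \<Rightarrow> [to_nat (Dn j a'), to_nat (if q \<and> a' = a then Qa j a' else Pa j a')]
    | Pa j a' \<Rightarrow> [to_nat (Dn j a'), to_nat (Pa j a')]
    | Qa j a' \<Rightarrow> [to_nat (Dn j a'), to_nat (Qa j a')])"

definition XP :: "nat \<Rightarrow> nat \<Rightarrow> nat \<Rightarrow> nat \<Rightarrow> bool \<Rightarrow> nat list set" where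
  "XP dl m a b q = (\<lambda>h. hc dl h a b) ` {..<2*m}
     \<union> (\<lambda>j. [to_nat (Dn j a), to_nat (if q then Qa j a else Pa j a)]) ` {..<m}
     \<union> (\<lambda>j. [to_nat (Dn j b), to_nat (Pa j b)]) ` {..<m}"

definition XS :: "nat \<Rightarrow> nat \<Rightarrow> nat list set" where
  "XS m a = (\<lambda>j. [to_nat (Dn j a), to_nat (Pa j a)]) ` {..<m}"

lemma XP_exchange:
  assumes dl: "2 \<le> dl" and a: "a \<in> {1,2,3}" and b: "b = nxt a"
  shows "exchange (Ev dl m) dl (\<Union>i\<in>{a,b}. VoF dl m i) (XP dl m a b q)"
proof (rule exchange_own[where g = "own dl a b q"])
  have bin: "b \<in> {1,2,3}" using nxt_in[OF a] b by simp
  have ab: "a \<noteq> b" using nxt_ne[OF a] b by simp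
  fix c assume c: "c \<in> XP dl m a b q"
  let ?W = "\<Union>i\<in>{a,b}. VoF dl m i"
  consider (h) h where "h < 2*m" "c = hc dl h a b"
    | (s1) j where "j < m" "c = [to_nat (Dn j a), to_nat (if q then Qa j a else Pa j a)]"
    | (s2) j where "j < m" "c = [to_nat (Dn j b), to_nat (Pa j b)]"
    using c unfolding XP_def by blast
  note cs = this
  show "is_cycle (Ev dl m) dl ?W c"
  proof (cases rule: cs)
    case (h h)
    have "set (hc dl h a b) \<subseteq> ?W"
      unfolding hc_set using mem_hub[OF dl h(1) a] mem_hub[OF dl h(1) bin] by auto
    then show ?thesis using hc_cycle[OF dl h(1) a bin ab] Lf_pair[OF dl a] b h(2) by simp
  next
    case (s1 j)
    have w: "(if q then Qa j a else Pa j a) = Pa j a \<or> (if q then Qa j a else Pa j a) = Qa j a" by simp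
    have "to_nat (if q then Qa j a else Pa j a) \<in> ?W"
      using mem_P[OF s1(1) a] mem_Q[OF s1(1) a] b by (cases q) auto
    moreover have "to_nat (Dn j a) \<in> ?W" using mem_D[OF s1(1) a] by auto
    ultimately show ?thesis using sc_cycle[OF dl s1(1) a w] s1(2) by simp
  next
    case (s2 j)
    have "to_nat (Pa j b) \<in> ?W" using mem_P[OF s2(1) bin] by auto
    moreover have "to_nat (Dn j b) \<in> ?W" using mem_D[OF s2(1) bin] by auto
    ultimately show ?thesis using sc_cycle[OF dl s2(1) bin, of "Pa j b"] s2(2) by simp
  qed
next
  have ab: "a \<noteq> b" using nxt_ne[OF a] b by simp
  fix c x assume c: "c \<in> XP dl m a b q" and x: "x \<in> set c"
  then consider (h) h where "h < 2*m" "c = hc dl h a b"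
    | (s1) j where "j < m" "c = [to_nat (Dn j a), to_nat (if q then Qa j a else Pa j a)]"
    | (s2) j where "j < m" "c = [to_nat (Dn j b), to_nat (Pa j b)]"
    unfolding XP_def by blast
  then show "own dl a b q x = c"
  proof cases
    case (h h)
    have "x \<in> set (hc dl h a b)" using x h(2) by simp
    then obtain i k where "x = to_nat (Hv h i k)" unfolding hc_set by blast
    then show ?thesis using h by (simp add: own_def)
  next
    case (s1 j)
    then show ?thesis using x by (cases q) (auto simp: own_def)
  next
    case (s2 j)
    then show ?thesis using x ab by (auto simp: own_def)
  qed
qed

lemma XS_exchange:
  assumes dl: "2 \<le> dl" and a: "a \<in> {1,2,3}"
  shows "exchange (Ev dl m) dl (\<Union>i\<in>{a}. VoF dl m i) (XS m a)"
proof (rule exchange_own[where g = "own dl a a False"])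
  fix c assume c: "c \<in> XS m a"
  then obtain j where j: "j < m" "c = [to_nat (Dn j a), to_nat (Pa j a)]" unfolding XS_def by blast
  show "is_cycle (Ev dl m) dl (\<Union>i\<in>{a}. VoF dl m i) c"
    using sc_cycle[OF dl j(1) a, of "Pa j a"] mem_P[OF j(1) a] mem_D[OF j(1) a] j(2) by simp
next
  fix c x assume c: "c \<in> XS m a" and x: "x \<in> set c"
  then obtain j where j: "j < m" "c = [to_nat (Dn j a), to_nat (Pa j a)]" unfolding XS_def by blast
  then show "own dl a a False x = c" using x by (auto simp: own_def)
qed

lemma card_img: "inj f \<Longrightarrow> card (f ` {..<n}) = n"
  by (simp add: card_image inj_on_subset[of f UNIV])

lemma XS_util: "m \<le> utility (UoF dl m a) (XS m a)" if a: "a \<in> {1,2,3}"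
proof -
  let ?K = "(\<lambda>j. to_nat (Pa j a)) ` {..<m}"
  have "card ?K = m" by (rule card_img) (simp add: inj_def)
  moreover have "?K \<subseteq> UoF dl m a \<inter> (\<Union>c\<in>XS m a. set c)"
    using pat_P[OF _ a] unfolding XS_def by auto
  ultimately show ?thesis using util_ge[OF _ UoF_fin] by metis
qed

lemma XP_util_a:
  assumes dl: "2 \<le> dl" and a: "a \<in> {1,2,3}" and b: "b = nxt a"
  shows "(if q then 2*m else 3*m) \<le> utility (UoF dl m a) (XP dl m a b q)"
proof -
  let ?K1 = "(\<lambda>h. tv h a) ` {..<2*m}" and ?K2 = "(\<lambda>j. to_nat (Pa j a)) ` {..<m}"
  have c1: "card ?K1 = 2*m" by (rule card_img) (simp add: inj_def tv_def)
  have c2: "card ?K2 = m" by (rule card_img) (simp add: inj_def)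
  have l0: "0 < Lf dl a" using Lf_pos[OF dl a] by simp
  have s1: "?K1 \<subseteq> UoF dl m a \<inter> (\<Union>c\<in>XP dl m a b q. set c)"
  proof
    fix x assume "x \<in> ?K1"
    then obtain h where h: "h < 2*m" "x = tv h a" by auto
    have "x \<in> (\<lambda>k. to_nat (Hv h a k)) ` {..<Lf dl a}" using h l0 unfolding tv_def by blast
    then have "x \<in> set (hc dl h a b)" unfolding hc_set by blast
    moreover have "hc dl h a b \<in> XP dl m a b q" unfolding XP_def using h by auto
    ultimately show "x \<in> UoF dl m a \<inter> (\<Union>c\<in>XP dl m a b q. set c)" using pat_hub[OF dl h(1) a] h by auto
  qed
  show ?thesis
  proof (cases q)
    case True
    then show ?thesis using util_ge[OF s1 UoF_fin] c1 by simp
  next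
    case False
    have s2: "?K2 \<subseteq> UoF dl m a \<inter> (\<Union>c\<in>XP dl m a b q. set c)"
      using pat_P[OF _ a] False unfolding XP_def by auto
    have dj: "?K1 \<inter> ?K2 = {}" unfolding tv_def by auto
    have "card (?K1 \<union> ?K2) = 3*m" using card_Un_disjoint[OF _ _ dj] c1 c2 by simp
    then show ?thesis using util_ge[of "?K1 \<union> ?K2", OF _ UoF_fin] s1 s2 False by simp
  qed
qed

lemma XP_util_b:
  assumes dl: "2 \<le> dl" and a: "a \<in> {1,2,3}" and b: "b = nxt a"
  shows "(if q then 4*m else 3*m) \<le> utility (UoF dl m b) (XP dl m a b q)"
proof -
  have bin: "b \<in> {1,2,3}" using nxt_in[OF a] b by simp
  let ?K1 = "(\<lambda>h. tv h b) ` {..<2*m}" and ?K2 = "(\<lambda>j. to_nat (Pa j b)) ` {..<m}"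
    and ?K3 = "(\<lambda>j. to_nat (Qa j a)) ` {..<m}"
  have c1: "card ?K1 = 2*m" by (rule card_img) (simp add: inj_def tv_def)
  have c2: "card ?K2 = m" by (rule card_img) (simp add: inj_def)
  have c3: "card ?K3 = m" by (rule card_img) (simp add: inj_def)
  have l0: "0 < Lf dl b" using Lf_pos[OF dl bin] by simp
  have s1: "?K1 \<subseteq> UoF dl m b \<inter> (\<Union>c\<in>XP dl m a b q. set c)"
  proof
    fix x assume "x \<in> ?K1"
    then obtain h where h: "h < 2*m" "x = tv h b" by auto
    have "x \<in> (\<lambda>k. to_nat (Hv h b k)) ` {..<Lf dl b}" using h l0 unfolding tv_def by blast
    then have "x \<in> set (hc dl h a b)" unfolding hc_set by blast
    moreover have "hc dl h a b \<in> XP dl m a b q" unfolding XP_def using h by auto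
    ultimately show "x \<in> UoF dl m b \<inter> (\<Union>c\<in>XP dl m a b q. set c)" using pat_hub[OF dl h(1) bin] h by auto
  qed
  have s2: "?K2 \<subseteq> UoF dl m b \<inter> (\<Union>c\<in>XP dl m a b q. set c)"
    using pat_P[OF _ bin] unfolding XP_def by auto
  have dj: "?K1 \<inter> ?K2 = {}" unfolding tv_def by auto
  have c12: "card (?K1 \<union> ?K2) = 3*m" using card_Un_disjoint[OF _ _ dj] c1 c2 by simp
  show ?thesis
  proof (cases q)
    case False
    then show ?thesis using util_ge[of "?K1 \<union> ?K2", OF _ UoF_fin] s1 s2 c12 by simp
  next
    case True
    have s3: "?K3 \<subseteq> UoF dl m b \<inter> (\<Union>c\<in>XP dl m a b q. set c)"
      using pat_Q[OF _ a] True b unfolding XP_def by auto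
    have dj2: "(?K1 \<union> ?K2) \<inter> ?K3 = {}" unfolding tv_def by auto
    have "card (?K1 \<union> ?K2 \<union> ?K3) = 4*m" using card_Un_disjoint[OF _ _ dj2] c12 c3 by simp
    then show ?thesis using util_ge[of "?K1 \<union> ?K2 \<union> ?K3", OF _ UoF_fin] s1 s2 s3 True by simp
  qed
qed



lemma no_block_single:
  assumes dl: "2 \<le> dl" and a: "a \<in> {1,2,3}"
    and nb: "\<not> blocks 3 (VoF dl m) (UoF dl m) (Ev dl m) dl {a} X"
  shows "m \<le> utility (UoF dl m a) X"
proof (rule ccontr)
  assume "\<not> ?thesis"
  then have "utility (UoF dl m a) X < utility (UoF dl m a) (XS m a)" using XS_util[OF a, where dl=dl and m=m] by simp
  then have "blocks 3 (VoF dl m) (UoF dl m) (Ev dl m) dl {a} X"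
    unfolding blocks_def using XS_exchange[OF dl a, where m=m] a by auto
  then show False using nb by simp
qed

lemma no_block_pair:
  assumes dl: "2 \<le> dl" and a: "a \<in> {1,2,3}"
    and nb: "\<not> blocks 3 (VoF dl m) (UoF dl m) (Ev dl m) dl {a, nxt a} X"
  shows "3*m \<le> utility (UoF dl m a) X \<or> 3*m \<le> utility (UoF dl m (nxt a)) X"
    "2*m \<le> utility (UoF dl m a) X \<or> 4*m \<le> utility (UoF dl m (nxt a)) X"
proof -
  have bin: "nxt a \<in> {1,2,3}" using nxt_in[OF a] .
  have sub: "{a, nxt a} \<subseteq> {1..3}" using a bin by auto
  show "3*m \<le> utility (UoF dl m a) X \<or> 3*m \<le> utility (UoF dl m (nxt a)) X"
  proof (rule ccontr)
    assume "\<not> ?thesis"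
    then have "\<forall>i\<in>{a, nxt a}. utility (UoF dl m i) X < utility (UoF dl m i) (XP dl m a (nxt a) False)"
      using XP_util_a[OF dl a refl, where m=m and q=False] XP_util_b[OF dl a refl, where m=m and q=False] by auto
    then have "blocks 3 (VoF dl m) (UoF dl m) (Ev dl m) dl {a, nxt a} X"
      unfolding blocks_def using XP_exchange[OF dl a refl, where m=m and q=False] sub by blast
    then show False using nb by simp
  qed
  show "2*m \<le> utility (UoF dl m a) X \<or> 4*m \<le> utility (UoF dl m (nxt a)) X"
  proof (rule ccontr)
    assume "\<not> ?thesis"
    then have "\<forall>i\<in>{a, nxt a}. utility (UoF dl m i) X < utility (UoF dl m i) (XP dl m a (nxt a) True)"
      using XP_util_a[OF dl a refl, where m=m and q=True] XP_util_b[OF dl a refl, where m=m and q=True] by auto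
    then have "blocks 3 (VoF dl m) (UoF dl m) (Ev dl m) dl {a, nxt a} X"
      unfolding blocks_def using XP_exchange[OF dl a refl, where m=m and q=True] sub by blast
    then show False using nb by simp
  qed
qed

lemma UoF_sub_Upat: "UoF dl m i \<subseteq> Upat dl m" unfolding UoF_def Upat_def by auto

lemma UoF_disj: "i \<noteq> j \<Longrightarrow> UoF dl m i \<inter> UoF dl m j = {}" unfolding UoF_def by auto

lemma util_sum:
  assumes dl: "2 \<le> dl" and finV0: "finite V0" and dj: "V0 \<inter> to_nat ` Vall dl m = {}"
    and ex: "exchange (supp_graph (to_nat ` Vall dl m) (Ev dl m) V0 Out) dl (to_nat ` Vall dl m \<union> V0) X"
  shows "utility (UoF dl m 1) X + utility (UoF dl m 2) X + utility (UoF dl m 3) X \<le> 7*m + dl * card V0"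
proof -
  define C where "C = (\<Union>c\<in>X. set c)"
  let ?Y = "{c \<in> X. set c \<inter> V0 = {}}" and ?Z = "{c \<in> X. set c \<inter> V0 \<noteq> {}}"
  have exY: "exchange (Ev dl m) dl (to_nat ` Vall dl m) ?Y" using supp_split[OF ex dj] .
  have cY: "card (Upat dl m \<inter> cov ?Y) \<le> 7*m" by (rule count_E[OF dl exY])
  have cZ: "card (cov ?Z) \<le> dl * card V0" and finZ: "finite ?Z" using alt_bound[OF ex finV0] by auto
  have finU: "finite (Upat dl m)" unfolding Upat_def using finite_Vall by auto
  have fincZ: "finite (cov ?Z)" unfolding cov_def using finZ by auto
  have Csub: "Upat dl m \<inter> C \<subseteq> (Upat dl m \<inter> cov ?Y) \<union> cov ?Z" unfolding C_def cov_def by blast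
  have "card (Upat dl m \<inter> C) \<le> card ((Upat dl m \<inter> cov ?Y) \<union> cov ?Z)"
    by (rule card_mono[OF _ Csub]) (use finU fincZ in auto)
  also have "\<dots> \<le> card (Upat dl m \<inter> cov ?Y) + card (cov ?Z)" by (rule card_Un_le)
  finally have tot: "card (Upat dl m \<inter> C) \<le> 7*m + dl * card V0" using cY cZ by simp
  have f: "\<And>i. finite (UoF dl m i \<inter> C)" using UoF_fin by auto
  have d12: "(UoF dl m 1 \<inter> C) \<inter> (UoF dl m 2 \<inter> C) = {}" using UoF_disj[of 1 2 dl m] by auto
  have d3: "((UoF dl m 1 \<inter> C) \<union> (UoF dl m 2 \<inter> C)) \<inter> (UoF dl m 3 \<inter> C) = {}"
    using UoF_disj[of 1 3 dl m] UoF_disj[of 2 3 dl m] by auto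
  have "card (UoF dl m 1 \<inter> C) + card (UoF dl m 2 \<inter> C) + card (UoF dl m 3 \<inter> C)
      = card ((UoF dl m 1 \<inter> C) \<union> (UoF dl m 2 \<inter> C) \<union> (UoF dl m 3 \<inter> C))"
    using card_Un_disjoint[OF f f d12] card_Un_disjoint[OF _ f d3] f by simp
  also have "\<dots> \<le> card (Upat dl m \<inter> C)"
    by (rule card_mono) (use finU UoF_sub_Upat in auto)
  finally show ?thesis using tot unfolding utility_def C_def by simp
qed



lemma arith_contra:
  fixes u1 u2 u3 m e :: nat
  assumes "m \<le> u1" "m \<le> u2" "m \<le> u3"
    "3*m \<le> u1 \<or> 3*m \<le> u2" "2*m \<le> u1 \<or> 4*m \<le> u2"
    "3*m \<le> u2 \<or> 3*m \<le> u3" "2*m \<le> u2 \<or> 4*m \<le> u3"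
    "3*m \<le> u3 \<or> 3*m \<le> u1" "2*m \<le> u3 \<or> 4*m \<le> u1"
    "u1 + u2 + u3 \<le> 7*m + e" "e < m"
  shows False
  using assms by (elim disjE) linarith+

lemma floor_bound:
  assumes "c \<le> nat \<lfloor>x\<rfloor>" "0 \<le> x"
  shows "real c \<le> x"
proof -
  have "0 \<le> \<lfloor>x\<rfloor>" using assms(2) by simp
  then have "real (nat \<lfloor>x\<rfloor>) = real_of_int \<lfloor>x\<rfloor>" by simp
  then have "real c \<le> real_of_int \<lfloor>x\<rfloor>" using assms(1) by (metis of_nat_mono)
  then show ?thesis using of_int_floor_le[of x] by linarith
qed

theorem mainTheorem4:
  fixes \<Delta> :: nat
  assumes "\<Delta> \<ge> 2"
  shows "\<exists>\<kappa>::real. \<kappa> > 0 \<and>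
    (\<forall>M::nat. \<exists>Vo Uo E. valid_economy 3 Vo Uo E \<and> card (econ_V 3 Vo) \<ge> M \<and>
        supp_core_empty 3 Vo Uo E \<Delta> (nat \<lfloor>\<kappa> * real (card (econ_V 3 Vo))\<rfloor>))"
proof -
  have dl: "2 \<le> \<Delta>" using assms .
  define K :: real where "K = real (\<Delta> * (6*\<Delta> + 9)) + 1"
  have Kpos: "0 < K" unfolding K_def using of_nat_0_le_iff[of "\<Delta> * (6*\<Delta> + 9)"] by linarith
  show ?thesis
  proof (intro exI[of _ "1/K"] conjI allI)
    show "0 < 1/K" using Kpos by simp
    fix M :: nat
    define m where "m = Suc M"
    let ?V = "econ_V 3 (VoF \<Delta> m)"
    show "\<exists>Vo Uo E. valid_economy 3 Vo Uo E \<and> card (econ_V 3 Vo) \<ge> M \<and>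
        supp_core_empty 3 Vo Uo E \<Delta> (nat \<lfloor>1/K * real (card (econ_V 3 Vo))\<rfloor>)"
    proof (intro exI conjI)
      show "valid_economy 3 (VoF \<Delta> m) (UoF \<Delta> m) (Ev \<Delta> m)" by (rule valid[OF dl])
      show "M \<le> card ?V" using card_V_ge[of m \<Delta>] unfolding m_def by simp
      show "supp_core_empty 3 (VoF \<Delta> m) (UoF \<Delta> m) (Ev \<Delta> m) \<Delta> (nat \<lfloor>1/K * real (card ?V)\<rfloor>)"
        unfolding supp_core_empty_def
      proof
        assume "\<exists>V0 Out X. finite V0 \<and> card V0 \<le> nat \<lfloor>1/K * real (card ?V)\<rfloor> \<and> V0 \<inter> ?V = {} \<and>
          (\<forall>a\<in>V0. Out a \<subseteq> (?V \<union> V0) - {a}) \<and>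
          in_supp_core 3 (VoF \<Delta> m) (UoF \<Delta> m) (Ev \<Delta> m) \<Delta> V0 Out X"
        then obtain V0 Out X where finV0: "finite V0" and cV0: "card V0 \<le> nat \<lfloor>1/K * real (card ?V)\<rfloor>"
          and dj: "V0 \<inter> ?V = {}" and core: "in_supp_core 3 (VoF \<Delta> m) (UoF \<Delta> m) (Ev \<Delta> m) \<Delta> V0 Out X"
          by blast
        have ex: "exchange (supp_graph ?V (Ev \<Delta> m) V0 Out) \<Delta> (?V \<union> V0) X"
          and nb: "\<And>P. \<not> blocks 3 (VoF \<Delta> m) (UoF \<Delta> m) (Ev \<Delta> m) \<Delta> P X"
          using core unfolding in_supp_core_def by auto
        have sum: "utility (UoF \<Delta> m 1) X + utility (UoF \<Delta> m 2) X + utility (UoF \<Delta> m 3) X \<le> 7*m + \<Delta> * card V0"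
          using util_sum[OF dl finV0 _ ex[unfolded econV]] dj unfolding econV by simp
        have small: "\<Delta> * card V0 < m"
        proof -
          have N: "real (card ?V) \<le> real m * (6*\<Delta> + 9)"
            using card_V_le[of \<Delta> m] by (simp add: algebra_simps of_nat_mono flip: of_nat_mult of_nat_add)
          have c: "real (card V0) \<le> 1/K * real (card ?V)"
            by (rule floor_bound[OF cV0]) (use Kpos in simp)
          then have "real (card V0) * K \<le> real (card ?V)" using Kpos by (simp add: field_simps)
          then have "real \<Delta> * (real (card V0) * K) \<le> real \<Delta> * real (card ?V)"
            by (simp add: mult_left_mono)
          also have "\<dots> \<le> real \<Delta> * (real m * (6*\<Delta> + 9))" using N by (simp add: mult_left_mono)
          also have "\<dots> = real m * (K - 1)" unfolding K_def by (simp add: algebra_simps)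
          also have "\<dots> < real m * K" unfolding m_def by (simp add: algebra_simps)
          finally have "(real \<Delta> * real (card V0)) * K < real m * K" by (simp add: algebra_simps)
          then have "real \<Delta> * real (card V0) < real m" using Kpos by simp
          then show ?thesis by (simp flip: of_nat_mult)
        qed
        have s1: "m \<le> utility (UoF \<Delta> m 1) X" by (rule no_block_single[OF dl _ nb]) simp
        have s2: "m \<le> utility (UoF \<Delta> m 2) X" by (rule no_block_single[OF dl _ nb]) simp
        have s3: "m \<le> utility (UoF \<Delta> m 3) X" by (rule no_block_single[OF dl _ nb]) simp
        have p1: "3*m \<le> utility (UoF \<Delta> m 1) X \<or> 3*m \<le> utility (UoF \<Delta> m 2) X"
          "2*m \<le> utility (UoF \<Delta> m 1) X \<or> 4*m \<le> utility (UoF \<Delta> m 2) X"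
          using no_block_pair[OF dl _ nb, of 1] nxt_vals by auto
        have p2: "3*m \<le> utility (UoF \<Delta> m 2) X \<or> 3*m \<le> utility (UoF \<Delta> m 3) X"
          "2*m \<le> utility (UoF \<Delta> m 2) X \<or> 4*m \<le> utility (UoF \<Delta> m 3) X"
          using no_block_pair[OF dl _ nb, of 2] nxt_vals by auto
        have p3: "3*m \<le> utility (UoF \<Delta> m 3) X \<or> 3*m \<le> utility (UoF \<Delta> m 1) X"
          "2*m \<le> utility (UoF \<Delta> m 3) X \<or> 4*m \<le> utility (UoF \<Delta> m 1) X"
          using no_block_pair[OF dl _ nb, of 3] nxt_vals by auto
        show False by (rule arith_contra[OF s1 s2 s3 p1 p2 p3 sum small])
      qed
    qed
  qed
qed

end
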